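(* Let $d<\infty$, let $f$ be the embedding map of an analytic disc $V\subset\mathbb{B}_d$ attached to the unit sphere, and let $\mu(z)=\lambda\frac{\alpha-z}{1-\bar\alpha z}$ with $\lambda\in\mathbb{T}$, $\alpha\in\mathbb{D}$. Then for all $\xi\in\mathbb{T}$, $$A_{f\circ\mu}(\xi)=A_f(\mu(\xi))\,\frac{1-|\alpha|^2}{|\alpha-\xi|^2}.$$
   Context: $\mathbb{D}$ is the open unit disc, $\mathbb{T}$ the unit circle, $\mathbb{B}_d$ the open unit ball of $\mathbb{C}^d$. The Drury–Arveson space $H^2_d$ is the RKHS on $\mathbb{B}_d$ with kernel $1/(1-\langle z,w\rangle)$, with multiplier algebra $\mathcal{M}_d$; a variety is a common zero set of a family of functions in $\mathcal{M}_d$. An analytic disc attached to the unit sphere is a variety $V\subset\mathbb{B}_d$ for which there is an injective analytic $f:\mathbb{D}\to\mathbb{B}_d$ with $f'\neq0$ on $\mathbb{D}$, $V=f(\mathbb{D})$, $f$ extends to a $C^2$ map on $\overline{\mathbb{D}}$, and for $x\in\overline{\mathbb{D}}$, $\|f(x)\|=1$ iff $|x|=1$ ($f$ is an embedding map). For a $C^1$ map $h$ on $\overline{\mathbb{D}}$, $A_h(\xi)=\langle h(\xi),h'(\xi)\xi\rangle$ for $\xi\in\mathbb{T}$. *)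

theory Defs
  imports "HOL-Analysis.Analysis"
begin

definition cinner :: "complex ^ 'd \<Rightarrow> complex ^ 'd \<Rightarrow> complex" where
  "cinner z w = (\<Sum>i\<in>UNIV. z $ i * cnj (w $ i))"

definition DA_kernel :: "complex ^ 'd \<Rightarrow> complex ^ 'd \<Rightarrow> complex" where
  "DA_kernel z w = 1 / (1 - cinner z w)"

definition psd_kernel_ball :: "(complex ^ 'd \<Rightarrow> complex ^ 'd \<Rightarrow> complex) \<Rightarrow> bool" where
  "psd_kernel_ball K \<longleftrightarrow>
     (\<forall>(n::nat) (z::nat \<Rightarrow> complex ^ 'd) (c::nat \<Rightarrow> complex).
        (\<forall>i<n. z i \<in> ball 0 1) \<longrightarrow>
        (let s = (\<Sum>i<n. \<Sum>j<n. cnj (c i) * c j * K (z i) (z j))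
         in Im s = 0 \<and> Re s \<ge> 0))"

text \<open>Membership in the Drury-Arveson space H^2_d (as a function on B_d), via
  Aronszajn's description of the RKHS with kernel DA_kernel:
  g belongs to the space iff C^2 K(z,w) - g(z) conj(g(w)) is a positive kernel for some C.\<close>
definition DA_space :: "(complex ^ 'd \<Rightarrow> complex) set" where
  "DA_space = {g. \<exists>C::real. C \<ge> 0 \<and>
      psd_kernel_ball (\<lambda>z w. complex_of_real (C\<^sup>2) * DA_kernel z w - g z * cnj (g w))}"

definition DA_multipliers :: "(complex ^ 'd \<Rightarrow> complex) set" where
  "DA_multipliers = {\<phi>. \<forall>g\<in>DA_space. (\<lambda>z. \<phi> z * g z) \<in> DA_space}"

definition DA_variety :: "(complex ^ 'd) set \<Rightarrow> bool" where
  "DA_variety V \<longleftrightarrow> (\<exists>S. S \<subseteq> DA_multipliers \<and>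
      V = {z \<in> ball 0 1. \<forall>\<phi>\<in>S. \<phi> z = 0})"

definition C2_on_cdisc :: "(complex \<Rightarrow> complex ^ 'd) \<Rightarrow> bool" where
  "C2_on_cdisc f \<longleftrightarrow>
     (\<exists>(D :: complex \<Rightarrow> (complex \<Rightarrow>\<^sub>L (complex ^ 'd)))
        (D2 :: complex \<Rightarrow> (complex \<Rightarrow>\<^sub>L (complex \<Rightarrow>\<^sub>L (complex ^ 'd)))).
        (\<forall>x\<in>cball 0 1. (f has_derivative blinfun_apply (D x)) (at x within cball 0 1)) \<and>
        (\<forall>x\<in>cball 0 1. (D has_derivative blinfun_apply (D2 x)) (at x within cball 0 1)) \<and>
        continuous_on (cball 0 1) D2)"

definition embedding_map :: "(complex \<Rightarrow> complex ^ 'd) \<Rightarrow> (complex ^ 'd) set \<Rightarrow> bool" where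
  "embedding_map f V \<longleftrightarrow>
     DA_variety V \<and>
     inj_on f (ball 0 1) \<and>
     (\<forall>i. (\<lambda>z. f z $ i) holomorphic_on ball 0 1) \<and>
     (\<forall>z\<in>ball 0 1. \<exists>i. deriv (\<lambda>w. f w $ i) z \<noteq> 0) \<and>
     V = f ` ball 0 1 \<and>
     C2_on_cdisc f \<and>
     (\<forall>x\<in>cball 0 1. norm (f x) = 1 \<longleftrightarrow> norm x = 1)"

text \<open>A_h(xi) = < h(xi), h'(xi) xi >, where h'(xi) xi is the (real) derivative of h
  within the closed disc at xi applied to the vector xi.\<close>
definition A_map :: "(complex \<Rightarrow> complex ^ 'd) \<Rightarrow> complex \<Rightarrow> complex" where
  "A_map h \<xi> = cinner (h \<xi>) (frechet_derivative h (at \<xi> within cball 0 1) \<xi>)"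

end

theory Submission imports Defs begin

lemma dir_unique:
  fixes f :: "'a::real_normed_vector \<Rightarrow> 'b::real_normed_vector"
  assumes f1: "(f has_derivative f1) (at x within S)" and f2: "(f has_derivative f2) (at x within S)"
    and d: "d > 0" and sub: "\<And>t. 0 \<le> t \<Longrightarrow> t \<le> d \<Longrightarrow> x + t *\<^sub>R v \<in> S"
  shows "f1 v = f2 v"
proof -
  let ?p = "\<lambda>t::real. x + t *\<^sub>R v"
  have p: "(?p has_derivative (\<lambda>t. t *\<^sub>R v)) (at 0 within {0..d})"
    by (auto intro!: derivative_eq_intros)
  have im: "?p ` {0..d} \<subseteq> S" using sub by auto
  have "((f \<circ> ?p) has_derivative (f1 \<circ> (\<lambda>t. t *\<^sub>R v))) (at 0 within {0..d})"
    by (rule diff_chain_within[OF p]) (use has_derivative_subset[OF f1 im] in simp)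
  moreover have "((f \<circ> ?p) has_derivative (f2 \<circ> (\<lambda>t. t *\<^sub>R v))) (at 0 within {0..d})"
    by (rule diff_chain_within[OF p]) (use has_derivative_subset[OF f2 im] in simp)
  moreover have l1: "linear f1" "linear f2" using f1 f2 has_derivative_linear by blast+
  ultimately have "((f \<circ> ?p) has_vector_derivative f1 v) (at 0 within {0..d})"
     "((f \<circ> ?p) has_vector_derivative f2 v) (at 0 within {0..d})"
    unfolding has_vector_derivative_def by (simp_all add: o_def linear_scale)
  moreover have "at (0::real) within {0..d} \<noteq> bot"
    using d by (simp add: trivial_limit_within islimpt_Icc)
  ultimately show ?thesis using vector_derivative_unique_within by blast
qed

lemma cball_unique:
  fixes f :: "complex \<Rightarrow> 'b::real_normed_vector"
  assumes f1: "(f has_derivative f1) (at \<xi> within cball 0 1)" and f2: "(f has_derivative f2) (at \<xi> within cball 0 1)"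
    and n: "norm \<xi> = 1"
  shows "f1 = f2"
proof -
  have l1: "linear f1" "linear f2" using f1 f2 has_derivative_linear by blast+
  have a: "f1 (-\<xi>) = f2 (-\<xi>)"
  proof (rule dir_unique[OF f1 f2, of 1])
    fix t :: real assume "0 \<le> t" "t \<le> 1"
    then show "\<xi> + t *\<^sub>R - \<xi> \<in> cball 0 1"
    proof -
      have "\<xi> + t *\<^sub>R - \<xi> = of_real (1-t) * \<xi>" by (simp add: scaleR_conv_of_real algebra_simps)
      moreover have "norm (of_real (1-t) * \<xi>) \<le> 1" using n \<open>0 \<le> t\<close> \<open>t \<le> 1\<close> by (simp only: norm_mult norm_of_real) simp
      ultimately show ?thesis by simp
    qed
  qed simp
  have b: "f1 (-\<xi> + \<i>*\<xi>) = f2 (-\<xi> + \<i>*\<xi>)"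
  proof (rule dir_unique[OF f1 f2, of 1])
    fix t :: real assume t: "0 \<le> t" "t \<le> 1"
    have e: "\<xi> + t *\<^sub>R (-\<xi> + \<i>*\<xi>) = \<xi> * Complex (1-t) t"
      by (simp add: scaleR_conv_of_real complex_eq_iff algebra_simps)
    have "norm (Complex (1-t) t) \<le> 1"
    proof -
      have "(1-t)^2 + t^2 \<le> 1" using t by (simp add: power2_eq_square algebra_simps) (smt (verit) mult_left_le_one_le)
      then show ?thesis by (simp add: cmod_def real_sqrt_le_1_iff)
    qed
    then show "\<xi> + t *\<^sub>R (-\<xi> + \<i>*\<xi>) \<in> cball 0 1"
      unfolding e using n by (simp add: norm_mult)
  qed simp
  show ?thesis
  proof
    fix w :: complex
    define c where "c = w / \<xi>"
    have "\<xi> \<noteq> 0" using n by auto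
    then have "w = c * \<xi>" unfolding c_def by simp
    also have "\<dots> = (of_real (Re c) + \<i> * of_real (Im c)) * \<xi>" using complex_eq[of c] by simp
    also have "\<dots> = (- Re c - Im c) *\<^sub>R (-\<xi>) + Im c *\<^sub>R (-\<xi> + \<i>*\<xi>)"
      by (simp add: scaleR_conv_of_real algebra_simps)
    finally have w: "w = (- Re c - Im c) *\<^sub>R (-\<xi>) + Im c *\<^sub>R (-\<xi> + \<i>*\<xi>)" .
    have "f1 w = (- Re c - Im c) *\<^sub>R f1 (-\<xi>) + Im c *\<^sub>R f1 (-\<xi> + \<i>*\<xi>)"
      by (subst w) (simp only: linear_add[OF l1(1)] linear_scale[OF l1(1)])
    moreover have "f2 w = (- Re c - Im c) *\<^sub>R f2 (-\<xi>) + Im c *\<^sub>R f2 (-\<xi> + \<i>*\<xi>)"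
      by (subst w) (simp only: linear_add[OF l1(2)] linear_scale[OF l1(2)])
    ultimately show "f1 w = f2 w" by (simp only: a b)
  qed
qed


lemma cinner_scaleR_right: "cinner z (r *\<^sub>R w) = of_real r * cinner z w"
  unfolding cinner_def vector_scaleR_component by (simp add: sum_distrib_left scaleR_conv_of_real algebra_simps)

lemma mob_ident:
  fixes a z :: complex
  shows "(norm (1 - cnj a * z))\<^sup>2 - (norm (a - z))\<^sup>2 = (1 - (norm a)\<^sup>2) * (1 - (norm z)\<^sup>2)"
  unfolding cmod_power2 by (simp add: power2_eq_square algebra_simps)

lemma mob_le:
  fixes a z :: complex
  assumes "norm a < 1" "norm z \<le> 1"
  shows "norm (a - z) \<le> norm (1 - cnj a * z)"
proof -
  have "(1 - (norm a)\<^sup>2) * (1 - (norm z)\<^sup>2) \<ge> 0"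
  proof -
    have "norm a * norm a \<le> 1" using mult_le_one[of "norm a" "norm a"] assms by simp
    moreover have "norm z * norm z \<le> 1" using mult_le_one[of "norm z" "norm z"] assms by simp
    ultimately show ?thesis by (simp add: power2_eq_square)
  qed
  then have "(norm (a - z))\<^sup>2 \<le> (norm (1 - cnj a * z))\<^sup>2" using mob_ident[of a z] by linarith
  then show ?thesis by (rule power2_le_imp_le) simp
qed

lemma mob_nz:
  fixes a z :: complex
  assumes "norm a < 1" "norm z \<le> 1"
  shows "1 - cnj a * z \<noteq> 0"
proof
  assume "1 - cnj a * z = 0"
  then have "cnj a * z = 1" by simp
  then have "norm (cnj a * z) = 1" by simp
  then have "norm a * norm z = 1" by (simp add: norm_mult)
  moreover have "norm a * norm z < 1" using assms
  proof -
    have "norm a * norm z \<le> norm a" using mult_left_le[OF assms(2) norm_ge_zero] .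
    then show ?thesis using assms(1) by linarith
  qed
  ultimately show False by simp
qed

lemma aux_field:
  fixes D N l B x :: complex
  assumes "D \<noteq> 0" "N \<noteq> 0"
  shows "l * (B * (x * D)) / (N * D\<^sup>2) = B / N * (l * x / D)"
  using assms by (simp add: power2_eq_square field_simps)

theorem lemma2p6:
  fixes f :: "complex \<Rightarrow> complex ^ 'd" and V :: "(complex ^ 'd) set"
    and lam \<alpha> :: complex
  assumes "embedding_map f V"
    and "norm lam = 1" and "norm \<alpha> < 1"
  defines "\<mu> \<equiv> (\<lambda>z. lam * (\<alpha> - z) / (1 - cnj \<alpha> * z))"
  shows "\<forall>\<xi>. norm \<xi> = 1 \<longrightarrow>
           A_map (f \<circ> \<mu>) \<xi> =
           A_map f (\<mu> \<xi>) * complex_of_real ((1 - (norm \<alpha>)\<^sup>2) / (norm (\<alpha> - \<xi>))\<^sup>2)"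
proof (intro allI impI)
  fix \<xi> :: complex
  assume n: "norm \<xi> = 1"
  have a: "norm \<alpha> < 1" by fact
  have C2: "C2_on_cdisc f" using assms(1) unfolding embedding_map_def by blast
  then obtain D :: "complex \<Rightarrow> (complex \<Rightarrow>\<^sub>L (complex ^ 'd))" where
    D: "\<And>x. x \<in> cball 0 1 \<Longrightarrow> (f has_derivative blinfun_apply (D x)) (at x within cball 0 1)"
    unfolding C2_on_cdisc_def by blast
  have maps: "\<mu> ` cball 0 1 \<subseteq> cball 0 1"
  proof
    fix y assume "y \<in> \<mu> ` cball 0 1"
    then obtain z where z: "norm z \<le> 1" "y = \<mu> z" by auto
    have nz: "1 - cnj \<alpha> * z \<noteq> 0" using mob_nz[OF a z(1)] .
    have "norm y = norm (\<alpha> - z) / norm (1 - cnj \<alpha> * z)"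
      using z assms(2) by (simp add: \<mu>_def norm_mult norm_divide)
    also have "\<dots> \<le> 1" using mob_le[OF a z(1)] nz by simp
    finally show "y \<in> cball 0 1" by simp
  qed
  define \<eta> where "\<eta> = \<mu> \<xi>"
  have \<eta>: "\<eta> \<in> cball 0 1" proof -
    have "\<xi> \<in> cball 0 1" using n by simp
    then show ?thesis using maps unfolding \<eta>_def by blast
  qed
  have nz: "1 - cnj \<alpha> * \<xi> \<noteq> 0" using mob_nz[OF a] n by simp
  have axi: "\<alpha> \<noteq> \<xi>" using a n by auto
  define m' where "m' = lam * (cnj \<alpha> * \<alpha> - 1) / (1 - cnj \<alpha> * \<xi>)\<^sup>2"
  have md0: "((\<lambda>z. lam * (\<alpha> - z) / (1 - cnj \<alpha> * z)) has_field_derivative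
     ((lam * (0 - 1)) * (1 - cnj \<alpha> * \<xi>) - lam * (\<alpha> - \<xi>) * (0 - cnj \<alpha> * 1)) / ((1 - cnj \<alpha> * \<xi>) * (1 - cnj \<alpha> * \<xi>))) (at \<xi>)"
    by (intro DERIV_divide DERIV_cmult DERIV_diff DERIV_const DERIV_ident nz)
  have "((lam * (0 - 1)) * (1 - cnj \<alpha> * \<xi>) - lam * (\<alpha> - \<xi>) * (0 - cnj \<alpha> * 1)) / ((1 - cnj \<alpha> * \<xi>) * (1 - cnj \<alpha> * \<xi>)) = m'"
    unfolding m'_def power2_eq_square by (simp add: algebra_simps)
  with md0 have md: "(\<mu> has_field_derivative m') (at \<xi>)" unfolding \<mu>_def by simp
  then have md2: "(\<mu> has_derivative (\<lambda>h. m' * h)) (at \<xi> within cball 0 1)"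
    unfolding has_field_derivative_def by (rule has_derivative_at_withinI)
  have fd: "(f has_derivative blinfun_apply (D \<eta>)) (at (\<mu> \<xi>) within \<mu> ` cball 0 1)"
    using has_derivative_subset[OF D[OF \<eta>] maps] unfolding \<eta>_def .
  have cd: "((f \<circ> \<mu>) has_derivative (blinfun_apply (D \<eta>) \<circ> (\<lambda>h. m' * h))) (at \<xi> within cball 0 1)"
    by (rule diff_chain_within[OF md2 fd])
  have fr1: "frechet_derivative (f \<circ> \<mu>) (at \<xi> within cball 0 1) = blinfun_apply (D \<eta>) \<circ> (\<lambda>h. m' * h)"
    by (rule cball_unique[OF _ cd n]) (rule frechet_derivative_works[THEN iffD1, OF differentiableI[OF cd]])
  have "(norm (\<alpha> - \<xi>))\<^sup>2 = (norm (1 - cnj \<alpha> * \<xi>))\<^sup>2" using mob_ident[of \<alpha> \<xi>] n by simp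
  then have eqn: "norm (\<alpha> - \<xi>) = norm (1 - cnj \<alpha> * \<xi>)" by (simp add: power2_eq_iff_nonneg)
  have n\<eta>: "norm \<eta> = 1" unfolding \<eta>_def \<mu>_def using eqn nz assms(2) by (simp add: norm_mult norm_divide)
  have fr2: "frechet_derivative f (at \<eta> within cball 0 1) = blinfun_apply (D \<eta>)"
    by (rule cball_unique[OF _ D[OF \<eta>] n\<eta>]) (rule frechet_derivative_works[THEN iffD1, OF differentiableI[OF D[OF \<eta>]]])
  define r where "r = (1 - (norm \<alpha>)\<^sup>2) / (norm (\<alpha> - \<xi>))\<^sup>2"
  define A where "A = complex_of_real ((norm \<alpha>)\<^sup>2)"
  define Nc where "Nc = complex_of_real ((norm (\<alpha> - \<xi>))\<^sup>2)"
  have Nc0: "Nc \<noteq> 0" unfolding Nc_def using axi by simp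
  have h0: "\<xi> * cnj \<xi> = 1" using complex_norm_square[of \<xi>] n by simp
  have h1: "1 - cnj \<alpha> * \<xi> = \<xi> * cnj (\<xi> - \<alpha>)"
    using h0 by (simp add: algebra_simps)
  have h2: "(\<alpha> - \<xi>) * cnj (\<xi> - \<alpha>) = - Nc"
    unfolding Nc_def complex_norm_square by (simp add: algebra_simps)
  have h3: "cnj \<alpha> * \<alpha> = A" unfolding A_def complex_norm_square by simp
  have E: "(A - 1) * \<xi> * Nc = (1 - A) * ((\<alpha> - \<xi>) * (1 - cnj \<alpha> * \<xi>))"
  proof -
    have "(\<alpha> - \<xi>) * (1 - cnj \<alpha> * \<xi>) = \<xi> * ((\<alpha> - \<xi>) * cnj (\<xi> - \<alpha>))"
      unfolding h1 by (simp add: algebra_simps)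
    also have "\<dots> = - \<xi> * Nc" unfolding h2 by simp
    finally have X: "(\<alpha> - \<xi>) * (1 - cnj \<alpha> * \<xi>) = - \<xi> * Nc" .
    show ?thesis unfolding X by (simp add: algebra_simps)
  qed
  have rr: "complex_of_real r = (1 - A) / Nc" unfolding r_def A_def Nc_def by simp
  have key: "m' * \<xi> = r *\<^sub>R \<eta>"
  proof -
    have "m' * \<xi> = lam * ((A - 1) * \<xi> * Nc) / (Nc * (1 - cnj \<alpha> * \<xi>)\<^sup>2)"
      unfolding m'_def h3 using Nc0 nz by (simp add: field_simps)
    also have "\<dots> = lam * ((1 - A) * ((\<alpha> - \<xi>) * (1 - cnj \<alpha> * \<xi>))) / (Nc * (1 - cnj \<alpha> * \<xi>)\<^sup>2)"
      unfolding E ..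
    also have "\<dots> = (1 - A) / Nc * (lam * (\<alpha> - \<xi>) / (1 - cnj \<alpha> * \<xi>))"
      by (rule aux_field[OF nz Nc0])
    also have "\<dots> = r *\<^sub>R \<eta>" unfolding scaleR_conv_of_real rr \<eta>_def \<mu>_def ..
    finally show ?thesis .
  qed
  show "A_map (f \<circ> \<mu>) \<xi> = A_map f (\<mu> \<xi>) * complex_of_real ((1 - (norm \<alpha>)\<^sup>2) / (norm (\<alpha> - \<xi>))\<^sup>2)"
  proof -
    have "A_map (f \<circ> \<mu>) \<xi> = cinner (f \<eta>) (D \<eta> (m' * \<xi>))"
      unfolding A_map_def fr1 by (simp add: \<eta>_def mult.commute)
    also have "\<dots> = cinner (f \<eta>) (r *\<^sub>R D \<eta> \<eta>)" by (simp add: key blinfun.scaleR_right)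
    also have "\<dots> = of_real r * A_map f \<eta>" unfolding A_map_def fr2 cinner_scaleR_right ..
    finally show ?thesis by (simp add: \<eta>_def r_def mult.commute)
  qed
qed

end
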